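(* Consider the oceanic model with threshold $h$ under the Shapley scheme. Let $\Pi$ be a partition of all players into winning pools such that every atomic player $i$ is in a pool whose other members are non-atomic players of total mass $k_i$ with $0<k_i\le h$ and $a_i+k_i\ge h$, all remaining non-atomic players are in pools containing no atomic player, each of total mass exactly $l\ge h$ (at least one such pool), and for all distinct atomic players $i,j$: \[\frac{h-a_i}{k_i^2}=\frac{1}{l},\qquad \frac{k_i+a_i-h}{k_i}\ge\frac{a_i}{l},\qquad \frac{k_i+a_i-h}{k_i}\ge\frac{(h-a_j)^2-(\max(0,h-a_i-a_j))^2+(\max(0,a_i-h+k_j))^2}{2k_j^2}.\] Then the Shapley scheme is Sybil-proof with respect to $\Pi$: no atomic player can obtain a strictly larger total payoff by a Sybil strategy than her payoff under $\Pi$.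
   Context: Oceanic model: finitely many atomic players, player $i$ with stake $a_i>0$, and a continuum of non-atomic players (a measurable set of them contributes stake equal to its measure); threshold $h>0$ with $a_i<h$ for all atomic $i$. Pools partition all players; a pool $S$ has stake $m(S)$ (non-atomic mass plus atomic stakes) and reward $\rho(S)=1$ if $m(S)\ge h$ (winning), else $0$. Shapley scheme (oceanic): in a pool $S$ with non-atomic mass $k>0$ and atomic members with stakes $b_1,\dots,b_t$, let $L_1,\dots,L_t$ be i.i.d. uniform on $[0,k]$ and $P(i)=\{j\ne i: L_j<L_i\}$; atomic member $i$ receives $\Pr\big[\sum_{j\in P(i)}b_j+L_i<h\le\sum_{j\in P(i)}b_j+L_i+b_i\big]$; the remainder is shared equally per unit of stake among non-atomic members. Sybil strategy: given a partition $\Pi$, an atomic player $i$ with stake $a_i$ splits her stake into nonnegative amounts $s_{1},\dots,s_{t}$ with $\sum_j s_j=a_i$ and joins $t$ distinct pools among those of $\Pi$ (her own original pool being taken without her), contributing $s_j$ to the $j$-th of them as a separate atomic identity of stake $s_j$; all other players stay put. Her payoff is the sum of the payments her identities receive in these pools. A scheme is Sybil-proof with respect to $\Pi$ if no atomic player becomes strictly better off (relative to her payoff under $\Pi$) by switching to a Sybil strategy. *)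

theory Defs
  imports "HOL-Probability.Probability"
begin

text \<open>Shapley payment (oceanic model) to the atomic member with index i of a pool with
  non-atomic mass k > 0 and atomic stakes bs (indexed 0..length bs - 1):
  the probability, for L_1,...,L_t i.i.d. uniform on [0,k], that
  sum of bs_j over predecessors j of i plus L_i < h <= that plus bs_i.\<close>

definition arrival_space :: "real \<Rightarrow> nat \<Rightarrow> (nat \<Rightarrow> real) measure" where
  "arrival_space k t = PiM {..<t} (\<lambda>_. uniform_measure lborel {0..k})"

definition shapley_pay :: "real \<Rightarrow> real \<Rightarrow> real list \<Rightarrow> nat \<Rightarrow> real" where
  "shapley_pay h k bs i =
     measure (arrival_space k (length bs))
       {L \<in> space (arrival_space k (length bs)).
          (let pre = (\<Sum>j\<in>{j. j < length bs \<and> j \<noteq> i \<and> L j < L i}. bs ! j)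
           in pre + L i < h \<and> h \<le> pre + L i + bs ! i)}"

text \<open>Pools of the partition: one pool per atomic player (atomic player + non-atomic mass),
  and purely non-atomic pools indexed by 'p.\<close>

datatype ('a, 'p) pool = APool 'a | NPool 'p

definition pools_of :: "'a set \<Rightarrow> 'p set \<Rightarrow> ('a, 'p) pool set" where
  "pools_of I P = APool ` I \<union> NPool ` P"

text \<open>Payment received by an identity of atomic player i with stake sigma joining pool x of the
  partition (i's own pool being taken without her).\<close>

definition identity_pay ::
  "real \<Rightarrow> real \<Rightarrow> ('a \<Rightarrow> real) \<Rightarrow> ('a \<Rightarrow> real) \<Rightarrow> 'a \<Rightarrow> ('a, 'p) pool \<Rightarrow> real \<Rightarrow> real" where
  "identity_pay h l a k i x \<sigma> =
     (case x of
        APool j \<Rightarrow> (if j = i then shapley_pay h (k i) [\<sigma>] 0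
                    else shapley_pay h (k j) [\<sigma>, a j] 0)
      | NPool p \<Rightarrow> shapley_pay h l [\<sigma>] 0)"

definition sybil_strategy ::
  "'a set \<Rightarrow> 'p set \<Rightarrow> ('a \<Rightarrow> real) \<Rightarrow> 'a \<Rightarrow> ('a, 'p) pool set \<Rightarrow> (('a, 'p) pool \<Rightarrow> real) \<Rightarrow> bool" where
  "sybil_strategy I P a i J s \<longleftrightarrow>
     J \<subseteq> pools_of I P \<and> (\<forall>x\<in>J. 0 \<le> s x) \<and> (\<Sum>x\<in>J. s x) = a i"

definition sybil_payoff ::
  "real \<Rightarrow> real \<Rightarrow> ('a \<Rightarrow> real) \<Rightarrow> ('a \<Rightarrow> real) \<Rightarrow> 'a \<Rightarrow> ('a, 'p) pool set \<Rightarrow> (('a, 'p) pool \<Rightarrow> real) \<Rightarrow> real" where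
  "sybil_payoff h l a k i J s = (\<Sum>x\<in>J. identity_pay h l a k i x (s x))"

end

theory Submission
  imports Defs
begin


abbreviation UM :: "real \<Rightarrow> real measure" where "UM k \<equiv> uniform_measure lborel {0..k}"

lemma UM_prob: "0 < k \<Longrightarrow> prob_space (UM k)"
  by (rule prob_space_uniform_measure) auto

lemma UM_psf: "0 < k \<Longrightarrow> product_sigma_finite (\<lambda>_::nat. UM k)"
  by (intro product_sigma_finite.intro prob_space_imp_sigma_finite UM_prob)

lemma nn1:
  assumes k: "0 < k" and g[measurable]: "g \<in> borel_measurable borel"
  shows "(\<integral>\<^sup>+L. g (L 0) \<partial>arrival_space k 1) = (\<integral>\<^sup>+x. g x \<partial>UM k)"
proof -
  interpret product_sigma_finite "\<lambda>_::nat. UM k" by (rule UM_psf[OF k])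
  have "{..<1::nat} = {0}" by auto
  then show ?thesis unfolding arrival_space_def
    by (simp add: product_nn_integral_singleton)
qed

lemma nn2:
  assumes k: "0 < k" and g[measurable]: "case_prod g \<in> borel_measurable (borel \<Otimes>\<^sub>M borel)"
  shows "(\<integral>\<^sup>+L. g (L 0) (L 1) \<partial>arrival_space k 2) = (\<integral>\<^sup>+x. \<integral>\<^sup>+y. g x y \<partial>UM k \<partial>UM k)"
proof -
  interpret product_sigma_finite "\<lambda>_::nat. UM k" by (rule UM_psf[OF k])
  have e: "{..<2::nat} = insert 1 {0}" by auto
  have "(\<integral>\<^sup>+L. g (L 0) (L 1) \<partial>arrival_space k 2) = 
     (\<integral>\<^sup>+ x. (\<integral>\<^sup>+ y. g ((x(1 := y)) 0) ((x(1 := y)) 1) \<partial>UM k) \<partial>(Pi\<^sub>M {0::nat} (\<lambda>_. UM k)))"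
    unfolding arrival_space_def e
    using product_nn_integral_insert[of "{0}" 1 "\<lambda>L. g (L 0) (L 1)"] by simp
  also have "\<dots> = (\<integral>\<^sup>+ x. (\<integral>\<^sup>+ y. g (x 0) y \<partial>UM k) \<partial>(Pi\<^sub>M {0::nat} (\<lambda>_. UM k)))"
    by simp
  also have "\<dots> = (\<integral>\<^sup>+x. \<integral>\<^sup>+y. g x y \<partial>UM k \<partial>UM k)"
    by (rule product_nn_integral_singleton) measurable
  finally show ?thesis .
qed

lemma ftc1:
  assumes "0 \<le> u" "u \<le> v" "0 < k"
  shows "(\<integral>\<^sup>+x. ennreal (x / k) * indicator {u..v} x \<partial>lborel) = ennreal ((v^2 - u^2) / (2*k))"
proof -
  have "(\<integral>\<^sup>+x. ennreal (x / k) * indicator {u..v} x \<partial>lborel) = ennreal (v^2/(2*k) - u^2/(2*k))"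
    using assms
    by (intro nn_integral_FTC_Icc[where F="\<lambda>x. x^2/(2*k)"]) (auto intro!: derivative_eq_intros simp: field_simps)
  then show ?thesis by (simp add: diff_divide_distrib)
qed

lemma ftc2:
  assumes "u \<le> v" "v \<le> k" "0 < k"
  shows "(\<integral>\<^sup>+x. ennreal ((k - x) / k) * indicator {u..v} x \<partial>lborel) = ennreal (((k-u)^2 - (k-v)^2) / (2*k))"
proof -
  have "(\<integral>\<^sup>+x. ennreal ((k - x) / k) * indicator {u..v} x \<partial>lborel) = ennreal ((\<lambda>x. -((k-x)^2)/(2*k)) v - (\<lambda>x. -((k-x)^2)/(2*k)) u)"
    using assms
    by (intro nn_integral_FTC_Icc[where F="\<lambda>x. -((k-x)^2)/(2*k)"]) (auto intro!: derivative_eq_intros simp: field_simps)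
  moreover have "(\<lambda>x. -((k-x)^2)/(2*k)) v - (\<lambda>x. -((k-x)^2)/(2*k)) u = ((k-u)^2 - (k-v)^2) / (2*k)"
    using assms by (simp add: field_simps)
  ultimately show ?thesis by simp
qed

lemma sp1:
  assumes k: "0 < k"
  shows "shapley_pay h k [\<sigma>] 0 = measure (UM k) {x. x < h \<and> h \<le> x + \<sigma>}"
proof -
  define S where "S = {x::real. x < h \<and> h \<le> x + \<sigma>}"
  have S[measurable]: "S \<in> sets borel" unfolding S_def by measurable
  define A where "A = arrival_space k 1"
  have sA: "space A = space (Pi\<^sub>M {..<1::nat} (\<lambda>_. UM k))" unfolding A_def arrival_space_def by simp
  have E: "{L \<in> space A. L 0 \<in> S} \<in> sets A" unfolding A_def arrival_space_def by measurable
  have m1: "shapley_pay h k [\<sigma>] 0 = measure A {L \<in> space A. L 0 \<in> S}"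
  proof -
    have emp: "\<And>L::nat\<Rightarrow>real. {j. j < length [\<sigma>] \<and> j \<noteq> 0 \<and> L j < L 0} = {}" by auto
    show ?thesis unfolding shapley_pay_def A_def S_def Let_def emp sum.empty by simp
  qed
  have "emeasure A {L \<in> space A. L 0 \<in> S} = (\<integral>\<^sup>+L. indicator S (L 0) \<partial>A)"
  proof -
    have "(\<integral>\<^sup>+L. indicator S (L 0) \<partial>A) = (\<integral>\<^sup>+L. indicator {L \<in> space A. L 0 \<in> S} L \<partial>A)"
      by (rule nn_integral_cong) (auto split: split_indicator)
    also have "\<dots> = emeasure A {L \<in> space A. L 0 \<in> S}" using E by (rule nn_integral_indicator)
    finally show ?thesis by simp
  qed
  also have "\<dots> = (\<integral>\<^sup>+x. indicator S x \<partial>UM k)"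
    unfolding A_def by (rule nn1[OF k]) measurable
  also have "\<dots> = emeasure (UM k) S" by (simp add: nn_integral_indicator)
  finally have "emeasure A {L \<in> space A. L 0 \<in> S} = emeasure (UM k) S" .
  then have "measure A {L \<in> space A. L 0 \<in> S} = measure (UM k) S" by (simp add: measure_def)
  then show ?thesis using m1 S_def by simp
qed

lemma um_measure:
  assumes k: "0 < k" and S: "S \<in> sets borel"
  shows "measure (UM k) S = measure lborel ({0..k} \<inter> S) / k"
  using k S by (subst measure_uniform_measure) auto

lemma Icc_fm: "{u..v::real} \<in> fmeasurable lborel"
  by (rule fmeasurable_compact) simp

lemma sp1_upper:
  assumes k: "0 < k"
  shows "shapley_pay h k [\<sigma>] 0 \<le> max 0 (k - h + \<sigma>) / k"
proof -
  define S where "S = {x::real. x < h \<and> h \<le> x + \<sigma>}"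
  have S[measurable]: "S \<in> sets borel" unfolding S_def by measurable
  have "measure lborel ({0..k} \<inter> S) \<le> measure lborel {h-\<sigma>..k}"
    by (rule measure_mono_fmeasurable) (auto simp: S_def Icc_fm)
  also have "\<dots> = max 0 (k - h + \<sigma>)"
    by (cases "h - \<sigma> \<le> k") auto
  finally show ?thesis using k
    by (simp add: sp1 um_measure S_def[symmetric] divide_right_mono)
qed

lemma sp1_upper2:
  assumes k: "0 < k" and s: "0 \<le> \<sigma>"
  shows "shapley_pay h k [\<sigma>] 0 \<le> \<sigma> / k"
proof -
  define S where "S = {x::real. x < h \<and> h \<le> x + \<sigma>}"
  have S[measurable]: "S \<in> sets borel" unfolding S_def by measurable
  have "measure lborel ({0..k} \<inter> S) \<le> measure lborel {h-\<sigma>..h}"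
    by (rule measure_mono_fmeasurable) (auto simp: S_def Icc_fm)
  also have "\<dots> = \<sigma>" using s by simp
  finally show ?thesis using k
    by (simp add: sp1 um_measure S_def[symmetric] divide_right_mono)
qed

lemma sp1_lower:
  assumes k: "0 < k" and "k \<le> h" "0 \<le> h - \<sigma>" "h - \<sigma> \<le> k"
  shows "(k - h + \<sigma>) / k \<le> shapley_pay h k [\<sigma>] 0"
proof -
  define S where "S = {x::real. x < h \<and> h \<le> x + \<sigma>}"
  have S[measurable]: "S \<in> sets borel" unfolding S_def by measurable
  have "measure lborel {h-\<sigma>..<k} \<le> measure lborel ({0..k} \<inter> S)"
    by (rule measure_mono_fmeasurable) (use assms in \<open>auto simp: S_def intro!: fmeasurableI2[OF Icc_fm[of 0 k]]\<close>)
  moreover have "measure lborel {h-\<sigma>..<k} = k - h + \<sigma>" using assms by simp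
  ultimately show ?thesis using k
    by (simp add: sp1 um_measure S_def[symmetric] divide_right_mono)
qed

lemma sp2_eq:
  assumes k: "0 < k"
  shows "shapley_pay h k [\<sigma>, b] 0 = measure (arrival_space k 2)
     {L \<in> space (arrival_space k 2). (if L 1 < L 0 then b else 0) + L 0 < h \<and> h \<le> (if L 1 < L 0 then b else 0) + L 0 + \<sigma>}"
proof -
  have e: "\<And>L::nat\<Rightarrow>real. {j. j < length [\<sigma>, b] \<and> j \<noteq> 0 \<and> L j < L 0} = (if L 1 < L 0 then {1} else {})"
    by (auto simp: less_Suc_eq)
  have e2: "\<And>L::nat\<Rightarrow>real. (\<Sum>j\<in>(if L 1 < L 0 then {1} else {}). [\<sigma>, b] ! j) = (if L 1 < L 0 then b else 0)"
    by simp
  show ?thesis unfolding shapley_pay_def Let_def e e2 by (simp add: numeral_2_eq_2)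
qed

lemma psi_bound:
  assumes k: "0 < k" and s: "0 \<le> \<sigma>"
  shows "measure (UM k) {y. (if y < x then b else 0) + x < h \<and> h \<le> (if y < x then b else 0) + x + \<sigma>}
    \<le> (if max 0 (h - b - \<sigma>) \<le> x \<and> x \<le> h - b then x / k else 0) + (if h - \<sigma> \<le> x \<and> x \<le> k then (k - x) / k else 0)"
proof -
  define Cs where "Cs = {y. (if y < x then b else 0) + x < h \<and> h \<le> (if y < x then b else 0) + x + \<sigma>}"
  have Cs[measurable]: "Cs \<in> sets borel" unfolding Cs_def by measurable
  define T1 where "T1 = (if max 0 (h - b - \<sigma>) \<le> x \<and> x \<le> h - b then {0..x} else {})"
  define T2 where "T2 = (if h - \<sigma> \<le> x \<and> x \<le> k then {x..k} else {})"
  have T1[measurable]: "T1 \<in> sets borel" unfolding T1_def by auto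
  have T2[measurable]: "T2 \<in> sets borel" unfolding T2_def by auto
  have sub: "{0..k} \<inter> Cs \<subseteq> T1 \<union> T2"
  proof
    fix y assume y: "y \<in> {0..k} \<inter> Cs"
    show "y \<in> T1 \<union> T2"
    proof (cases "y < x")
      case True
      then show ?thesis using y unfolding Cs_def T1_def by auto
    next
      case False
      then show ?thesis using y unfolding Cs_def T2_def by auto
    qed
  qed
  have fm: "T1 \<union> T2 \<in> fmeasurable lborel"
    unfolding T1_def T2_def by (auto intro!: fmeasurable.Un Icc_fm)
  have "measure lborel ({0..k} \<inter> Cs) \<le> measure lborel (T1 \<union> T2)"
    by (rule measure_mono_fmeasurable[OF sub _ fm]) simp
  also have "\<dots> \<le> measure lborel T1 + measure lborel T2"
    by (rule measure_Un_le) auto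
  also have "measure lborel T1 = (if max 0 (h - b - \<sigma>) \<le> x \<and> x \<le> h - b then x else 0)"
    unfolding T1_def by auto
  also have "measure lborel T2 = (if h - \<sigma> \<le> x \<and> x \<le> k then k - x else 0)"
    unfolding T2_def by auto
  finally have mb: "measure lborel ({0..k} \<inter> Cs) \<le>
     (if max 0 (h - b - \<sigma>) \<le> x \<and> x \<le> h - b then x else 0) + (if h - \<sigma> \<le> x \<and> x \<le> k then k - x else 0)" .
  have "measure lborel ({0..k} \<inter> Cs) / k \<le>
     ((if max 0 (h - b - \<sigma>) \<le> x \<and> x \<le> h - b then x else 0) + (if h - \<sigma> \<le> x \<and> x \<le> k then k - x else 0)) / k"
    using divide_right_mono[OF mb, of k] k by simp
  then show ?thesis using k
    by (auto simp: um_measure Cs_def[symmetric] add_divide_distrib split: if_split_asm)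
qed

lemma sp2_upper:
  assumes k: "0 < k" and d0: "0 \<le> h - b" and dk: "h - b \<le> k" and s: "0 \<le> \<sigma>"
  shows "shapley_pay h k [\<sigma>, b] 0 \<le> ((h - b)^2 - (max 0 (h - b - \<sigma>))^2 + (max 0 (\<sigma> - h + k))^2) / (2 * k^2)"
proof -
  define A where "A = arrival_space k 2"
  define C where "C x y \<longleftrightarrow> (if y < x then b else 0) + x < h \<and> h \<le> (if y < x then b else 0) + x + \<sigma>" for x y :: real
  define g where "g x y = (if C x y then 1 else 0 :: ennreal)" for x y
  define \<alpha> where "\<alpha> = max 0 (h - b - \<sigma>)"
  define \<psi> where "\<psi> x = (if \<alpha> \<le> x \<and> x \<le> h - b then x / k else 0) + (if h - \<sigma> \<le> x \<and> x \<le> k then (k - x) / k else 0)" for x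
  define T where "T = ((h - b)^2 - \<alpha>^2) / (2*k) + (max 0 (\<sigma> - h + k))^2 / (2*k)"
  have a0: "0 \<le> \<alpha>" and ad: "\<alpha> \<le> h - b" unfolding \<alpha>_def using d0 s by auto
  have "\<alpha>^2 \<le> (h-b)^2" by (rule power_mono[OF ad a0])
  then have T0: "0 \<le> T" unfolding T_def using k by (intro add_nonneg_nonneg divide_nonneg_nonneg) auto
  have gm[measurable]: "case_prod g \<in> borel_measurable (borel \<Otimes>\<^sub>M borel)"
    unfolding g_def C_def by measurable
  have E: "{L \<in> space A. C (L 0) (L 1)} \<in> sets A"
    unfolding A_def arrival_space_def C_def by measurable
  have m1: "shapley_pay h k [\<sigma>, b] 0 = measure A {L \<in> space A. C (L 0) (L 1)}"
    using sp2_eq[OF k] unfolding A_def C_def by simp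
  have "emeasure A {L \<in> space A. C (L 0) (L 1)} = (\<integral>\<^sup>+L. indicator {L \<in> space A. C (L 0) (L 1)} L \<partial>A)"
    using E by (rule nn_integral_indicator[symmetric])
  also have "\<dots> = (\<integral>\<^sup>+L. g (L 0) (L 1) \<partial>A)"
    by (rule nn_integral_cong) (auto simp: g_def split: split_indicator)
  also have "\<dots> = (\<integral>\<^sup>+x. \<integral>\<^sup>+y. g x y \<partial>UM k \<partial>UM k)"
    unfolding A_def by (rule nn2[OF k gm])
  also have "\<dots> \<le> (\<integral>\<^sup>+x. ennreal (\<psi> x) \<partial>UM k)"
  proof (rule nn_integral_mono)
    fix x
    interpret P: prob_space "UM k" by (rule UM_prob[OF k])
    have Cx[measurable]: "{y. C x y} \<in> sets (UM k)" unfolding C_def by simp measurable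
    have "(\<integral>\<^sup>+y. g x y \<partial>UM k) = (\<integral>\<^sup>+y. indicator {y. C x y} y \<partial>UM k)"
      by (rule nn_integral_cong) (auto simp: g_def split: split_indicator)
    also have "\<dots> = emeasure (UM k) {y. C x y}" using Cx by (rule nn_integral_indicator)
    also have "\<dots> = ennreal (measure (UM k) {y. C x y})" by (rule P.emeasure_eq_measure)
    also have "\<dots> \<le> ennreal (\<psi> x)"
      using psi_bound[OF k s, of x b h] unfolding C_def \<psi>_def \<alpha>_def by (intro ennreal_leI) simp
    finally show "(\<integral>\<^sup>+y. g x y \<partial>UM k) \<le> ennreal (\<psi> x)" .
  qed
  also have "\<dots> = (\<integral>\<^sup>+x. ennreal (\<psi> x) * indicator {0..k} x \<partial>lborel) / emeasure lborel {0..k}"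
    by (rule nn_integral_uniform_measure) (auto simp: \<psi>_def)
  also have "\<dots> \<le> (\<integral>\<^sup>+x. ennreal (\<psi> x) \<partial>lborel) / ennreal k"
    using k by (auto intro!: divide_right_mono_ennreal nn_integral_mono simp: split: split_indicator)
  also have "(\<integral>\<^sup>+x. ennreal (\<psi> x) \<partial>lborel) = (\<integral>\<^sup>+x. ennreal (x / k) * indicator {\<alpha>..h-b} x + ennreal ((k - x) / k) * indicator {h-\<sigma>..k} x \<partial>lborel)"
    using a0 k by (intro nn_integral_cong) (auto simp: \<psi>_def split: split_indicator)
  also have "\<dots> = (\<integral>\<^sup>+x. ennreal (x / k) * indicator {\<alpha>..h-b} x \<partial>lborel) + (\<integral>\<^sup>+x. ennreal ((k - x) / k) * indicator {h-\<sigma>..k} x \<partial>lborel)"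
    by (rule nn_integral_add) auto
  also have "(\<integral>\<^sup>+x. ennreal (x / k) * indicator {\<alpha>..h-b} x \<partial>lborel) = ennreal (((h - b)^2 - \<alpha>^2) / (2*k))"
    by (rule ftc1[OF a0 ad k])
  also have "(\<integral>\<^sup>+x. ennreal ((k - x) / k) * indicator {h-\<sigma>..k} x \<partial>lborel) = ennreal ((max 0 (\<sigma> - h + k))^2 / (2*k))"
  proof (cases "h - \<sigma> \<le> k")
    case True
    then have "max 0 (\<sigma> - h + k) = k - (h - \<sigma>)" by simp
    then show ?thesis using ftc2[OF True order_refl k] by simp
  next
    case False
    then have "\<And>x. indicator {h-\<sigma>..k} x = (0::ennreal)" by (auto split: split_indicator)
    with False show ?thesis by simp
  qed
  also have "ennreal (((h - b)^2 - \<alpha>^2) / (2*k)) + ennreal ((max 0 (\<sigma> - h + k))^2 / (2*k)) = ennreal T"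
    unfolding T_def using k a0 ad by (subst ennreal_plus) (auto intro!: divide_nonneg_nonneg simp: power_mono)
  also have "ennreal T / ennreal k = ennreal (T / k)"
    using T0 k by (intro divide_ennreal) auto
  finally have le: "emeasure A {L \<in> space A. C (L 0) (L 1)} \<le> ennreal (T / k)" .
  have "measure A {L \<in> space A. C (L 0) (L 1)} \<le> T / k"
    using enn2real_mono[OF le] T0 k by (simp add: measure_def)
  also have "T / k = ((h - b)^2 - (max 0 (h - b - \<sigma>))^2 + (max 0 (\<sigma> - h + k))^2) / (2 * k^2)"
    unfolding T_def \<alpha>_def using k by (simp add: field_simps power2_eq_square)
  finally show ?thesis using m1 by simp
qed



lemma keyR:
  fixes \<sigma> a c d :: real
  assumes s0: "0 \<le> \<sigma>" and sa: "\<sigma> \<le> a" and c0: "0 \<le> c" and d0: "0 \<le> d"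
  shows "a * ((max 0 (\<sigma>-d))^2 + (max 0 (\<sigma>-c))^2 - \<sigma>^2) \<le> \<sigma> * max 0 ((max 0 (a-d))^2 + (max 0 (a-c))^2 - a^2)"
proof -
  define R where "R x = (max 0 (x-d))^2 + (max 0 (x-c))^2 - x^2" for x :: real
  have a0: "0 \<le> a" using s0 sa by linarith
  show ?thesis
  proof (cases "R \<sigma> \<le> 0")
    case True
    have "a * R \<sigma> \<le> 0" using True a0 by (simp add: mult_nonneg_nonpos)
    also have "0 \<le> \<sigma> * max 0 (R a)" using s0 by simp
    finally show ?thesis unfolding R_def .
  next
    case False
    have sd: "\<sigma> > d"
    proof (rule ccontr)
      assume "\<not> \<sigma> > d"
      then have "R \<sigma> = (max 0 (\<sigma>-c))^2 - \<sigma>^2" unfolding R_def by simp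
      also have "(max 0 (\<sigma>-c))^2 \<le> \<sigma>^2" using s0 c0 by (intro power_mono) auto
      finally show False using False by simp
    qed
    have sc: "\<sigma> > c"
    proof (rule ccontr)
      assume "\<not> \<sigma> > c"
      then have "R \<sigma> = (max 0 (\<sigma>-d))^2 - \<sigma>^2" unfolding R_def by simp
      also have "(max 0 (\<sigma>-d))^2 \<le> \<sigma>^2" using s0 d0 by (intro power_mono) auto
      finally show False using False by simp
    qed
    define K where "K = c^2 + d^2"
    have Rs: "R \<sigma> = \<sigma>^2 - 2*(c+d)*\<sigma> + K" unfolding R_def K_def using sd sc
      by (simp add: power2_eq_square algebra_simps)
    have Ra: "R a = a^2 - 2*(c+d)*a + K" unfolding R_def K_def using sd sc sa
      by (simp add: power2_eq_square algebra_simps)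
    have "c*c \<le> c*\<sigma>" using sc c0 by (intro mult_left_mono) auto
    moreover have "d*d \<le> d*\<sigma>" using sd d0 by (intro mult_left_mono) auto
    ultimately have "2*K \<le> 2*(c+d)*\<sigma>" unfolding K_def by (simp add: power2_eq_square algebra_simps)
    then have sK: "K \<le> \<sigma>^2" using False Rs by linarith
    have "\<sigma>^2 \<le> a * \<sigma>" using sa s0 by (simp add: power2_eq_square mult_right_mono)
    then have "0 \<le> (a - \<sigma>) * (a * \<sigma> - K)" using sK sa by (intro mult_nonneg_nonneg) auto
    then have "a * R \<sigma> \<le> \<sigma> * R a" unfolding Rs Ra by (simp add: algebra_simps power2_eq_square)
    also have "\<dots> \<le> \<sigma> * max 0 (R a)" using s0 by (intro mult_left_mono) auto
    finally show ?thesis unfolding R_def .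
  qed
qed

lemma apool_bound:
  fixes k d h \<sigma> a l V :: real
  assumes k0: "0 < k" and d0: "0 \<le> d" and kh: "k \<le> h" and s0: "0 \<le> \<sigma>" and sa: "\<sigma> \<le> a"
    and a0: "0 < a" and l0: "0 < l" and dl: "d / k^2 = 1 / l"
    and Qa: "(d^2 - (max 0 (d - a))^2 + (max 0 (a - h + k))^2) / (2 * k^2) \<le> V"
    and aV: "a / l \<le> V"
  shows "(d^2 - (max 0 (d - \<sigma>))^2 + (max 0 (\<sigma> - h + k))^2) / (2 * k^2) \<le> \<sigma> * V / a"
proof -
  define c where "c = h - k"
  have c0: "0 \<le> c" using kh c_def by simp
  define R where "R x = (max 0 (x-d))^2 + (max 0 (x-c))^2 - x^2" for x :: real
  have id: "d^2 - (max 0 (d - x))^2 + (max 0 (x - h + k))^2 = 2*d*x + R x" for x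
    unfolding R_def c_def by (cases "x \<le> d") (auto simp: power2_eq_square algebra_simps max_def)
  have dl': "d = k^2 / l" using dl k0 l0 by (simp add: field_simps)
  have Q: "(d^2 - (max 0 (d - x))^2 + (max 0 (x - h + k))^2) / (2 * k^2) = x / l + R x / (2*k^2)" for x
  proof -
    have "(2*d*x + R x) / (2*k^2) = x * (d / k^2) + R x / (2*k^2)" using k0 by (simp add: field_simps)
    then show ?thesis unfolding id dl by simp
  qed
  have key: "a * R \<sigma> \<le> \<sigma> * max 0 (R a)"
    unfolding R_def by (rule keyR[OF s0 sa c0 d0])
  have e0: "0 < 2*k^2" using k0 by simp
  have sl: "\<sigma> / l \<le> \<sigma> * V / a"
  proof -
    have "\<sigma> / l = (\<sigma> / a) * (a / l)" using a0 by simp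
    also have "\<dots> \<le> (\<sigma> / a) * V" using aV s0 a0 by (intro mult_left_mono) auto
    finally show ?thesis by simp
  qed
  show ?thesis
  proof (cases "R a \<le> 0")
    case True
    then have "a * R \<sigma> \<le> 0" using key by simp
    then have "R \<sigma> \<le> 0" using a0 by (simp add: mult_le_0_iff)
    then have "R \<sigma> / (2*k^2) \<le> 0" using e0 by (simp add: divide_nonpos_pos)
    then show ?thesis unfolding Q using sl by linarith
  next
    case False
    then have "a * R \<sigma> \<le> \<sigma> * R a" using key by simp
    then have "R \<sigma> \<le> \<sigma> * R a / a" using a0 by (simp add: field_simps)
    then have "R \<sigma> / (2*k^2) \<le> (\<sigma> * R a / a) / (2*k^2)" using e0 by (intro divide_right_mono) auto
    also have "\<dots> = (\<sigma> / a) * (R a / (2*k^2))" by simp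
    finally have "R \<sigma> / (2*k^2) \<le> (\<sigma> / a) * (R a / (2*k^2))" .
    then have "\<sigma> / l + R \<sigma> / (2*k^2) \<le> (\<sigma> / a) * (a / l + R a / (2*k^2))"
      using a0 by (simp add: algebra_simps)
    also have "\<dots> \<le> (\<sigma> / a) * V" using Qa[unfolded Q] s0 a0 by (intro mult_left_mono) auto
    finally show ?thesis unfolding Q by simp
  qed
qed


lemma own_bound:
  fixes k h \<sigma> a :: real
  assumes k0: "0 < k" and kh: "k \<le> h" and s0: "0 \<le> \<sigma>" and sa: "\<sigma> \<le> a" and a0: "0 < a"
    and ak: "h \<le> a + k"
  shows "max 0 (k - h + \<sigma>) / k \<le> \<sigma> * ((k + a - h) / k) / a"
proof (cases "k - h + \<sigma> \<le> 0")
  case True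
  have "0 \<le> \<sigma> * ((k + a - h) / k) / a" using s0 k0 a0 ak by (intro divide_nonneg_nonneg mult_nonneg_nonneg) auto
  then show ?thesis using True by simp
next
  case False
  have "(k - h) * (a - \<sigma>) \<le> 0" using kh sa by (intro mult_nonpos_nonneg) auto
  then have "(k - h + \<sigma>) * a \<le> \<sigma> * (k + a - h)" by (simp add: algebra_simps)
  then have "k - h + \<sigma> \<le> \<sigma> * (k + a - h) / a" using a0 by (simp add: pos_le_divide_eq)
  then have "(k - h + \<sigma>) / k \<le> (\<sigma> * (k + a - h) / a) / k" using k0 by (intro divide_right_mono) auto
  also have "\<dots> = \<sigma> * ((k + a - h) / k) / a" by simp
  finally have "(k - h + \<sigma>) / k \<le> \<sigma> * ((k + a - h) / k) / a" .
  then show ?thesis using False by simp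
qed

theorem theorem5p1:
  fixes h l :: real and a k :: "'a \<Rightarrow> real" and I :: "'a set" and P :: "'p set"
  assumes "0 < h" and "finite I" and "finite P" and "P \<noteq> {}"
    and "\<forall>i\<in>I. 0 < a i \<and> a i < h"
    and "\<forall>i\<in>I. 0 < k i \<and> k i \<le> h \<and> h \<le> a i + k i"
    and "h \<le> l"
    and "\<forall>i\<in>I. (h - a i) / (k i)^2 = 1 / l"
    and "\<forall>i\<in>I. (k i + a i - h) / k i \<ge> a i / l"
    and "\<forall>i\<in>I. \<forall>j\<in>I. i \<noteq> j \<longrightarrow>
           (k i + a i - h) / k i \<ge>
           ((h - a j)^2 - (max 0 (h - a i - a j))^2 + (max 0 (a i - h + k j))^2) / (2 * (k j)^2)"
  shows "\<forall>i\<in>I. \<forall>J s. sybil_strategy I P a i J s \<longrightarrow>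
           sybil_payoff h l a k i J s \<le> shapley_pay h (k i) [a i] 0"
proof (intro ballI allI impI)
  note h0 = assms(1) and fI = assms(2) and fP = assms(3) and A5 = assms(5) and A6 = assms(6)
    and hl = assms(7) and A8 = assms(8) and A9 = assms(9) and A10 = assms(10)
  fix i J s
  assume iI: "i \<in> I" and st: "sybil_strategy I P a i J s"
  have l0: "0 < l" using h0 hl by linarith
  have ai: "0 < a i" "a i < h" using A5 iI by auto
  have ki: "0 < k i" "k i \<le> h" "h \<le> a i + k i" using A6 iI by auto
  define V where "V = (k i + a i - h) / k i"
  have Jsub: "J \<subseteq> pools_of I P" and snn: "\<forall>x\<in>J. 0 \<le> s x" and ssum: "(\<Sum>x\<in>J. s x) = a i"
    using st unfolding sybil_strategy_def by auto
  have fJ: "finite J" using Jsub fI fP unfolding pools_of_def by (auto intro: finite_subset)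
  have sle: "s x \<le> a i" if "x \<in> J" for x
    using member_le_sum[of x J s] that snn fJ ssum by auto
  have each: "identity_pay h l a k i x (s x) \<le> s x * V / a i" if xJ: "x \<in> J" for x
  proof -
    have s0: "0 \<le> s x" using snn xJ by auto
    have sa: "s x \<le> a i" using sle xJ .
    have aV: "a i / l \<le> V" using A9 iI unfolding V_def by auto
    show ?thesis
    proof (cases x)
      case (APool j)
      then have jI: "j \<in> I" using Jsub xJ unfolding pools_of_def by auto
      show ?thesis
      proof (cases "j = i")
        case True
        have "identity_pay h l a k i x (s x) = shapley_pay h (k i) [s x] 0"
          using APool True unfolding identity_pay_def by simp
        also have "\<dots> \<le> max 0 (k i - h + s x) / k i" by (rule sp1_upper[OF ki(1)])
        also have "\<dots> \<le> s x * V / a i" unfolding V_def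
          by (rule own_bound[OF ki(1) ki(2) s0 sa ai(1) ki(3)])
        finally show ?thesis .
      next
        case False
        have kj: "0 < k j" "k j \<le> h" "h \<le> a j + k j" using A6 jI by auto
        have aj: "0 < a j" "a j < h" using A5 jI by auto
        have "identity_pay h l a k i x (s x) = shapley_pay h (k j) [s x, a j] 0"
          using APool False unfolding identity_pay_def by simp
        also have "\<dots> \<le> ((h - a j)^2 - (max 0 (h - a j - s x))^2 + (max 0 (s x - h + k j))^2) / (2 * (k j)^2)"
          by (rule sp2_upper) (use kj aj s0 in auto)
        also have "\<dots> \<le> s x * V / a i"
        proof (rule apool_bound[OF kj(1) _ kj(2) s0 sa ai(1) l0])
          show "0 \<le> h - a j" using aj by simp
          show "(h - a j) / (k j)^2 = 1 / l" using A8 jI by auto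
          show "a i / l \<le> V" by (rule aV)
          have "h - a j - a i = h - a i - a j" by simp
          then show "((h - a j)^2 - (max 0 (h - a j - a i))^2 + (max 0 (a i - h + k j))^2) / (2 * (k j)^2) \<le> V"
            using A10 iI jI False unfolding V_def by (metis (no_types, lifting))
        qed
        finally show ?thesis .
      qed
    next
      case (NPool p)
      have "identity_pay h l a k i x (s x) = shapley_pay h l [s x] 0"
        using NPool unfolding identity_pay_def by simp
      also have "\<dots> \<le> s x / l" by (rule sp1_upper2[OF l0 s0])
      also have "\<dots> \<le> s x * V / a i"
      proof -
        have "s x / l = (s x / a i) * (a i / l)" using ai by simp
        also have "\<dots> \<le> (s x / a i) * V" using aV s0 ai by (intro mult_left_mono) auto
        finally show ?thesis by simp
      qed
      finally show ?thesis .
    qed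
  qed
  have "sybil_payoff h l a k i J s \<le> (\<Sum>x\<in>J. s x * V / a i)"
    unfolding sybil_payoff_def by (rule sum_mono) (rule each)
  also have "\<dots> = (\<Sum>x\<in>J. s x) * V / a i" by (simp add: sum_distrib_right sum_divide_distrib)
  also have "\<dots> = V" using ssum ai by simp
  also have "V \<le> shapley_pay h (k i) [a i] 0" unfolding V_def
    using sp1_lower[of "k i" h "a i"] ki ai by (simp add: algebra_simps)
  finally show "sybil_payoff h l a k i J s \<le> shapley_pay h (k i) [a i] 0" .
qed

end
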